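(* Let $\mathcal{G}\subseteq C(\mathbb{R},\mathbb{R})$ be nonempty. The following conditions are equivalent: (1) $\mathcal{K}_\mathcal{G}=\{\mathrm{CL}(\mathbb{R})\cap\mathcal{P}(X):X\subseteq\mathbb{R}\}$; (2) $\mathcal{G}$ is a complete and connected family, and for every $x\in\mathbb{R}$ there exists $f\in C(\mathbb{R},\mathbb{R})$ such that $f\setminus\bigcup\mathcal{G}=f\restriction\{x\}$ (i.e., $(x,f(x))$ is the only point of the graph of $f$ not in $\bigcup\mathcal{G}$).
   Context: Functions are identified with their graphs, so $\bigcup\mathcal{G}\subseteq\mathbb{R}^2$ is the union of graphs. $\mathrm{CL}(\mathbb{R})$ is the family of closed subsets of $\mathbb{R}$ and $\mathcal{P}(X)$ the power set of $X$. A family $\mathcal{G}\subseteq C(\mathbb{R},\mathbb{R})$ is complete if $g\in\mathcal{G}$ for every $g\in C(\mathbb{R},\mathbb{R})$ whose graph is contained in $\bigcup\mathcal{G}$; it is connected if for any $f,g\in\mathcal{G}$ and $x\neq y$ there is $h\in\mathcal{G}$ with $h(x)=f(x)$ and $h(y)=g(y)$. For $\mathcal{G}\subseteq C(\mathbb{R},\mathbb{R})$ let $R_\mathcal{G}=\{(f,E)\in C(\mathbb{R},\mathbb{R})\times\mathrm{CL}(\mathbb{R}):(\exists g\in\mathcal{G})\, f\restriction E=g\restriction E\}$; for $\mathcal{F}\subseteq C(\mathbb{R},\mathbb{R})$ put $E_\mathcal{G}(\mathcal{F})=\{E\in\mathrm{CL}(\mathbb{R}):(\forall f\in\mathcal{F})\,(f,E)\in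 R_\mathcal{G}\}$, and let $\mathcal{K}_\mathcal{G}=\{E_\mathcal{G}(\mathcal{F}):\mathcal{F}\subseteq C(\mathbb{R},\mathbb{R})\}$. *)

theory Defs
  imports "HOL-Analysis.Analysis"
begin

definition CRR :: "(real \<Rightarrow> real) set" where
  "CRR = {f. continuous_on UNIV f}"

definition graph :: "(real \<Rightarrow> real) \<Rightarrow> (real \<times> real) set" where
  "graph f = {(x, f x) | x. True}"

definition union_graphs :: "(real \<Rightarrow> real) set \<Rightarrow> (real \<times> real) set" where
  "union_graphs G = (\<Union>g\<in>G. graph g)"

definition complete_family :: "(real \<Rightarrow> real) set \<Rightarrow> bool" where
  "complete_family G \<longleftrightarrow> (\<forall>g\<in>CRR. graph g \<subseteq> union_graphs G \<longrightarrow> g \<in> G)"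

definition connected_family :: "(real \<Rightarrow> real) set \<Rightarrow> bool" where
  "connected_family G \<longleftrightarrow>
     (\<forall>f\<in>G. \<forall>g\<in>G. \<forall>x y. x \<noteq> y \<longrightarrow> (\<exists>h\<in>G. h x = f x \<and> h y = g y))"

definition R_rel :: "(real \<Rightarrow> real) set \<Rightarrow> ((real \<Rightarrow> real) \<times> real set) set" where
  "R_rel G = {(f, E). f \<in> CRR \<and> closed E \<and> (\<exists>g\<in>G. \<forall>x\<in>E. f x = g x)}"

definition E_of :: "(real \<Rightarrow> real) set \<Rightarrow> (real \<Rightarrow> real) set \<Rightarrow> real set set" where
  "E_of G F = {E. closed E \<and> (\<forall>f\<in>F. (f, E) \<in> R_rel G)}"

definition K_of :: "(real \<Rightarrow> real) set \<Rightarrow> real set set set" where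
  "K_of G = {E_of G F | F. F \<subseteq> CRR}"

end

theory Submission
  imports Defs
begin


definition inS :: "(real\<Rightarrow>real) set \<Rightarrow> real \<Rightarrow> real \<Rightarrow> bool" where
  "inS G t y \<longleftrightarrow> (\<exists>g\<in>G. g t = y)"

lemma mem_ug: "(t,y) \<in> union_graphs G \<longleftrightarrow> inS G t y"
  by (auto simp: union_graphs_def graph_def inS_def)

lemma inS_G: "g \<in> G \<Longrightarrow> inS G t (g t)"
  by (auto simp: inS_def)

definition med3 :: "real \<Rightarrow> real \<Rightarrow> real \<Rightarrow> real" where
  "med3 x y z = max (min x y) (min (max x y) z)"

lemma med3_cases: "med3 x y z = x \<or> med3 x y z = y \<or> med3 x y z = z"
  by (auto simp: med3_def min_def max_def)

lemma med3_bounds: "min x y \<le> med3 x y z" "med3 x y z \<le> max x y"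
  by (auto simp: med3_def min_def max_def)

lemma med3_yy: "med3 x y y = y" and med3_xx: "med3 x y x = x"
  by (auto simp: med3_def min_def max_def)

lemma complete_in:
  assumes "complete_family G" "continuous_on UNIV h" "\<And>t. inS G t (h t)"
  shows "h \<in> G"
proof -
  have "h \<in> CRR" using assms(2) by (simp add: CRR_def)
  moreover have "graph h \<subseteq> union_graphs G"
    using assms(3) by (auto simp: graph_def mem_ug)
  ultimately show ?thesis using assms(1) by (auto simp: complete_family_def)
qed

lemma G_cont: "G \<subseteq> CRR \<Longrightarrow> g \<in> G \<Longrightarrow> continuous_on UNIV g"
  by (auto simp: CRR_def)

lemma med_in:
  assumes "G \<subseteq> CRR" "complete_family G" "u \<in> G" "v \<in> G" "w \<in> G"
  shows "(\<lambda>t. med3 (u t) (v t) (w t)) \<in> G"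
proof (rule complete_in[OF assms(2)])
  have [continuous_intros]: "continuous_on UNIV u" "continuous_on UNIV v" "continuous_on UNIV w"
    using assms G_cont by auto
  show "continuous_on UNIV (\<lambda>t. med3 (u t) (v t) (w t))"
    unfolding med3_def by (intro continuous_intros)
  show "inS G t (med3 (u t) (v t) (w t))" for t
    using med3_cases[of "u t" "v t" "w t"] assms inS_G by metis
qed

lemma glue_in:
  assumes "G \<subseteq> CRR" "complete_family G" "u \<in> G" "v \<in> G" "u c = v c"
  shows "(\<lambda>t. if t \<le> c then u t else v t) \<in> G"
proof (rule complete_in[OF assms(2)])
  have "continuous_on UNIV u" "continuous_on UNIV v"
    using assms G_cont by auto
  then show "continuous_on UNIV (\<lambda>t. if t \<le> c then u t else v t)"
    using assms(5)
    by (intro continuous_on_cases_le[where h="\<lambda>t. t", simplified])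
       (auto intro: continuous_on_subset)
  show "inS G t (if t \<le> c then u t else v t)" for t
    using assms inS_G by auto
qed



lemma cont_eps:
  fixes g :: "real \<Rightarrow> real"
  assumes "continuous_on UNIV g" "e > 0"
  shows "\<exists>d>0. \<forall>t. \<bar>t - x\<bar> < d \<longrightarrow> \<bar>g t - g x\<bar> < e"
proof -
  have "isCont g x" using assms(1) by (simp add: continuous_on_eq_continuous_at)
  then show ?thesis using assms(2) unfolding continuous_at_eps_delta dist_real_def by blast
qed

lemma med3_close:
  assumes "\<bar>x - c\<bar> < e" "\<bar>y - c\<bar> < e"
  shows "\<bar>med3 x y z - c\<bar> < e"
  using med3_bounds[of x y z] assms by (auto simp: min_def max_def abs_less_iff split: if_splits)

lemma LL:
  assumes GC: "G \<subseteq> CRR" and cp: "complete_family G" and cn: "connected_family G"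
    and uG: "u \<in> G" and ep: "\<epsilon> > 0"
  shows "\<exists>\<delta>>0. \<forall>a b ya yb. p - \<delta> < a \<longrightarrow> a < b \<longrightarrow> b < p + \<delta> \<longrightarrow> inS G a ya \<longrightarrow> inS G b yb
     \<longrightarrow> \<bar>ya - u p\<bar> < \<delta> \<longrightarrow> \<bar>yb - u p\<bar> < \<delta>
     \<longrightarrow> (\<exists>\<phi>\<in>G. \<phi> a = ya \<and> \<phi> b = yb \<and> (\<forall>t\<in>{a..b}. \<bar>\<phi> t - u p\<bar> < \<epsilon>))"
proof -
  obtain d where d: "d > 0" "\<And>t. \<bar>t - p\<bar> < d \<Longrightarrow> \<bar>u t - u p\<bar> < \<epsilon>/2"
    using cont_eps[OF G_cont[OF GC uG], of "\<epsilon>/2" p] ep by auto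
  define \<delta> where "\<delta> = min d (\<epsilon>/2)"
  have "\<delta> > 0" using d ep by (simp add: \<delta>_def)
  moreover
  { fix a b ya yb
    assume ab: "p - \<delta> < a" "a < b" "b < p + \<delta>" and ia: "inS G a ya" and ib: "inS G b yb"
      and ya: "\<bar>ya - u p\<bar> < \<delta>" and yb: "\<bar>yb - u p\<bar> < \<delta>"
    obtain va where va: "va \<in> G" "va a = ya" using ia by (auto simp: inS_def)
    obtain vb where vb: "vb \<in> G" "vb b = yb" using ib by (auto simp: inS_def)
    obtain da where da: "da > 0" "\<And>t. \<bar>t - a\<bar> < da \<Longrightarrow> \<bar>va t - va a\<bar> < \<epsilon>/2"
      using cont_eps[OF G_cont[OF GC va(1)], of "\<epsilon>/2" a] ep by auto
    obtain db where db: "db > 0" "\<And>t. \<bar>t - b\<bar> < db \<Longrightarrow> \<bar>vb t - vb b\<bar> < \<epsilon>/2"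
      using cont_eps[OF G_cont[OF GC vb(1)], of "\<epsilon>/2" b] ep by auto
    define a' where "a' = min (a + da/2) ((a+b)/2)"
    define b' where "b' = max (b - db/2) ((a+b)/2)"
    have a'1: "a < a'" "a' \<le> b'" "b' < b" using ab da db by (auto simp: a'_def b'_def)
    obtain g1 where g1: "g1 \<in> G" "g1 a = va a" "g1 a' = u a'"
      using cn va(1) uG a'1 unfolding connected_family_def by (metis less_irrefl)
    obtain g2 where g2: "g2 \<in> G" "g2 b' = u b'" "g2 b = vb b"
      using cn vb(1) uG a'1 unfolding connected_family_def by (metis less_irrefl)
    define \<psi>1 where "\<psi>1 = (\<lambda>t. med3 (u t) (va t) (g1 t))"
    define \<psi>2 where "\<psi>2 = (\<lambda>t. med3 (u t) (vb t) (g2 t))"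
    define \<psi>3 where "\<psi>3 = (\<lambda>t. if t \<le> b' then u t else \<psi>2 t)"
    define \<phi> where "\<phi> = (\<lambda>t. if t \<le> a' then \<psi>1 t else \<psi>3 t)"
    have p1: "\<psi>1 \<in> G" unfolding \<psi>1_def by (rule med_in[OF GC cp uG va(1) g1(1)])
    have p2: "\<psi>2 \<in> G" unfolding \<psi>2_def by (rule med_in[OF GC cp uG vb(1) g2(1)])
    have p3: "\<psi>3 \<in> G" unfolding \<psi>3_def
      by (rule glue_in[OF GC cp uG p2]) (simp add: \<psi>2_def g2 med3_xx)
    have "\<phi> \<in> G" unfolding \<phi>_def
      by (rule glue_in[OF GC cp p1 p3]) (simp add: \<psi>1_def \<psi>3_def g1 med3_xx a'1)
    moreover have "\<phi> a = ya" using a'1 by (simp add: \<phi>_def \<psi>1_def g1 va med3_yy)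
    moreover have "\<phi> b = yb" using a'1 by (simp add: \<phi>_def \<psi>3_def \<psi>2_def g2 vb med3_yy)
    moreover have "\<forall>t\<in>{a..b}. \<bar>\<phi> t - u p\<bar> < \<epsilon>"
    proof
      fix t assume t: "t \<in> {a..b}"
      have "\<bar>t - p\<bar> < d" using t ab unfolding \<delta>_def by auto
      then have ut: "\<bar>u t - u p\<bar> < \<epsilon>" using d(2)[of t] abs_ge_zero[of "u t - u p"] by linarith
      show "\<bar>\<phi> t - u p\<bar> < \<epsilon>"
      proof (cases "t \<le> a'")
        case True
        have "\<bar>t - a\<bar> < da" using True t da unfolding a'_def by auto
        then have h1: "\<bar>va t - ya\<bar> < \<epsilon>/2" using da(2)[of t] va by simp
        have h2: "\<bar>ya - u p\<bar> < \<epsilon>/2" using ya unfolding \<delta>_def by simp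
        have "\<bar>va t - u p\<bar> < \<epsilon>" using h1 h2 by arith
        then show ?thesis using True ut med3_close by (simp add: \<phi>_def \<psi>1_def)
      next
        case F: False
        show ?thesis
        proof (cases "t \<le> b'")
          case True then show ?thesis using F ut by (simp add: \<phi>_def \<psi>3_def)
        next
          case False
          have "\<bar>t - b\<bar> < db" using False t db unfolding b'_def by auto
          then have h1: "\<bar>vb t - yb\<bar> < \<epsilon>/2" using db(2)[of t] vb by simp
        have h2: "\<bar>yb - u p\<bar> < \<epsilon>/2" using yb unfolding \<delta>_def by simp
        have "\<bar>vb t - u p\<bar> < \<epsilon>" using h1 h2 by arith
          then show ?thesis using False F ut med3_close by (simp add: \<phi>_def \<psi>3_def \<psi>2_def)
        qed
      qed
    qed
    ultimately have "\<exists>\<phi>\<in>G. \<phi> a = ya \<and> \<phi> b = yb \<and> (\<forall>t\<in>{a..b}. \<bar>\<phi> t - u p\<bar> < \<epsilon>)" by blast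
  }
  ultimately show ?thesis by blast
qed



lemma lo_props:
  fixes E :: "real set"
  assumes "closed E" "e \<in> E" "e \<le> x"
  shows "Sup (E \<inter> {..x}) \<in> E" "Sup (E \<inter> {..x}) \<le> x" "\<And>e'. e' \<in> E \<Longrightarrow> e' \<le> x \<Longrightarrow> e' \<le> Sup (E \<inter> {..x})"
proof -
  have ne: "E \<inter> {..x} \<noteq> {}" using assms by auto
  have bd: "bdd_above (E \<inter> {..x})" by (rule bdd_aboveI[of _ x]) auto
  have cl: "closed (E \<inter> {..x})" using assms(1) by (simp add: closed_Int)
  have "Sup (E \<inter> {..x}) \<in> E \<inter> {..x}" by (rule closed_contains_Sup[OF ne bd cl])
  then show "Sup (E \<inter> {..x}) \<in> E" "Sup (E \<inter> {..x}) \<le> x" by auto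
  show "\<And>e'. e' \<in> E \<Longrightarrow> e' \<le> x \<Longrightarrow> e' \<le> Sup (E \<inter> {..x})"
    using bd by (intro cSup_upper) auto
qed

lemma hi_props:
  fixes E :: "real set"
  assumes "closed E" "e \<in> E" "x \<le> e"
  shows "Inf (E \<inter> {x..}) \<in> E" "x \<le> Inf (E \<inter> {x..})" "\<And>e'. e' \<in> E \<Longrightarrow> x \<le> e' \<Longrightarrow> Inf (E \<inter> {x..}) \<le> e'"
proof -
  have ne: "E \<inter> {x..} \<noteq> {}" using assms by auto
  have bd: "bdd_below (E \<inter> {x..})" by (rule bdd_belowI[of _ x]) auto
  have cl: "closed (E \<inter> {x..})" using assms(1) by (simp add: closed_Int)
  have "Inf (E \<inter> {x..}) \<in> E \<inter> {x..}" by (rule closed_contains_Inf[OF ne bd cl])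
  then show "Inf (E \<inter> {x..}) \<in> E" "x \<le> Inf (E \<inter> {x..})" by auto
  show "\<And>e'. e' \<in> E \<Longrightarrow> x \<le> e' \<Longrightarrow> Inf (E \<inter> {x..}) \<le> e'"
    using bd by (intro cInf_lower) auto
qed

lemma Phi_exists:
  assumes GC: "G \<subseteq> CRR" and cn: "connected_family G"
    and ia: "inS G a (f a)" and ib: "inS G b (f b)" and ab: "a < b"
  shows "\<exists>\<phi>. \<phi> \<in> G \<and> \<phi> a = f a \<and> \<phi> b = f b \<and>
     (\<forall>e\<in>{e. \<exists>\<psi>\<in>G. \<psi> a = f a \<and> \<psi> b = f b \<and> (\<forall>t\<in>{a..b}. \<bar>\<psi> t - f a\<bar> \<le> e)}.
        \<forall>t\<in>{a..b}. \<bar>\<phi> t - f a\<bar> \<le> e + (b - a))"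
proof -
  define M where "M = {e. \<exists>\<psi>\<in>G. \<psi> a = f a \<and> \<psi> b = f b \<and> (\<forall>t\<in>{a..b}. \<bar>\<psi> t - f a\<bar> \<le> e)}"
  obtain va where va: "va \<in> G" "va a = f a" using ia by (auto simp: inS_def)
  obtain vb where vb: "vb \<in> G" "vb b = f b" using ib by (auto simp: inS_def)
  obtain \<psi> where \<psi>: "\<psi> \<in> G" "\<psi> a = f a" "\<psi> b = f b"
    using cn va vb ab unfolding connected_family_def by (metis less_irrefl)
  have "continuous_on {a..b} (\<lambda>t. \<bar>\<psi> t - f a\<bar>)"
    using G_cont[OF GC \<psi>(1)] by (intro continuous_intros) (auto intro: continuous_on_subset)
  then obtain s where "s \<in> {a..b}" "\<forall>t\<in>{a..b}. \<bar>\<psi> t - f a\<bar> \<le> \<bar>\<psi> s - f a\<bar>"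
    using continuous_attains_sup[of "{a..b}" "\<lambda>t. \<bar>\<psi> t - f a\<bar>"] ab by auto
  then have ne: "M \<noteq> {}" unfolding M_def using \<psi> by blast
  have bd: "bdd_below M"
  proof (rule bdd_belowI[of _ 0])
    fix e assume "e \<in> M"
    then obtain \<psi>' where "\<psi>' a = f a" "\<forall>t\<in>{a..b}. \<bar>\<psi>' t - f a\<bar> \<le> e" unfolding M_def by blast
    then show "0 \<le> e" using ab by (metis abs_ge_zero atLeastAtMost_iff order.trans order_refl less_imp_le)
  qed
  have "Inf M < Inf M + (b - a)" using ab by simp
  then obtain e0 where e0: "e0 \<in> M" "e0 < Inf M + (b - a)"
    using cInf_less_iff[OF ne bd] by blast
  then obtain \<phi> where \<phi>: "\<phi> \<in> G" "\<phi> a = f a" "\<phi> b = f b" "\<forall>t\<in>{a..b}. \<bar>\<phi> t - f a\<bar> \<le> e0"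
    unfolding M_def by blast
  have "\<forall>e\<in>M. \<forall>t\<in>{a..b}. \<bar>\<phi> t - f a\<bar> \<le> e + (b - a)"
  proof (intro ballI)
    fix e t assume "e \<in> M" "t \<in> {a..b}"
    then have "Inf M \<le> e" using cInf_lower bd by blast
    then show "\<bar>\<phi> t - f a\<bar> \<le> e + (b - a)" using \<phi>(4) \<open>t \<in> {a..b}\<close> e0 by force
  qed
  then show ?thesis using \<phi> unfolding M_def by blast
qed



lemma KL:
  fixes f :: "real \<Rightarrow> real" and E :: "real set"
  assumes GC: "G \<subseteq> CRR" and Gne: "G \<noteq> {}" and cp: "complete_family G" and cn: "connected_family G"
    and fc: "continuous_on UNIV f" and cE: "closed E" and fE: "\<And>x. x \<in> E \<Longrightarrow> inS G x (f x)"
  shows "\<exists>g\<in>G. \<forall>x\<in>E. f x = g x"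
proof (cases "E = {}")
  case True then show ?thesis using Gne by auto
next
  case Ene: False
  define V where "V a = (SOME v. v \<in> G \<and> v a = f a)" for a
  have V: "V a \<in> G" "V a a = f a" if "a \<in> E" for a
  proof -
    have "\<exists>v. v \<in> G \<and> v a = f a" using fE[OF that] by (auto simp: inS_def)
    from someI_ex[OF this] show "V a \<in> G" "V a a = f a" by (auto simp: V_def)
  qed
  define M where "M a b = {e. \<exists>\<psi>\<in>G. \<psi> a = f a \<and> \<psi> b = f b \<and> (\<forall>t\<in>{a..b}. \<bar>\<psi> t - f a\<bar> \<le> e)}" for a b
  define \<Phi> where "\<Phi> a b = (SOME \<phi>. \<phi> \<in> G \<and> \<phi> a = f a \<and> \<phi> b = f b \<and>
      (\<forall>e\<in>M a b. \<forall>t\<in>{a..b}. \<bar>\<phi> t - f a\<bar> \<le> e + (b - a)))" for a b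
  have \<Phi>: "\<Phi> a b \<in> G \<and> \<Phi> a b a = f a \<and> \<Phi> a b b = f b \<and>
      (\<forall>e\<in>M a b. \<forall>t\<in>{a..b}. \<bar>\<Phi> a b t - f a\<bar> \<le> e + (b - a))" if "a \<in> E" "b \<in> E" "a < b" for a b
    unfolding \<Phi>_def M_def by (rule someI_ex[OF Phi_exists[OF GC cn fE[OF that(1)] fE[OF that(2)] that(3)]])
  define lo where "lo x = Sup (E \<inter> {..x})" for x
  define hi where "hi x = Inf (E \<inter> {x..})" for x
  define br where "br x = (if E \<inter> {..x} = {} then V (hi x) else if E \<inter> {x..} = {} then V (lo x)
      else \<Phi> (lo x) (hi x))" for x
  define g where "g x = (if x \<in> E then f x else br x x)" for x
  have loP: "lo x \<in> E" "lo x \<le> x" "\<And>e'. e' \<in> E \<Longrightarrow> e' \<le> x \<Longrightarrow> e' \<le> lo x" if "e \<in> E" "e \<le> x" for e x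
    unfolding lo_def using lo_props[OF cE that] by auto
  have hiP: "hi x \<in> E" "x \<le> hi x" "\<And>e'. e' \<in> E \<Longrightarrow> x \<le> e' \<Longrightarrow> hi x \<le> e'" if "e \<in> E" "x \<le> e" for e x
    unfolding hi_def using hi_props[OF cE that] by auto
  have brG: "br x \<in> G" if xE: "x \<notin> E" for x
  proof (cases "E \<inter> {..x} = {}")
    case True
    obtain e where "e \<in> E" using Ene by auto
    then have "x \<le> e" using True by (auto simp: not_le)
    then show ?thesis using True hiP[OF \<open>e \<in> E\<close>] V by (simp add: br_def)
  next
    case F1: False
    then obtain e where e: "e \<in> E" "e \<le> x" by auto
    show ?thesis
    proof (cases "E \<inter> {x..} = {}")
      case True
      then show ?thesis using F1 loP[OF e] V by (simp add: br_def)
    next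
      case False
      then obtain e' where e': "e' \<in> E" "x \<le> e'" by auto
      have "lo x \<noteq> x" using loP[OF e] xE by metis
      then have "lo x < hi x" using loP(2)[OF e] hiP(2)[OF e'] by linarith
      then show ?thesis using F1 False \<Phi> loP[OF e] hiP[OF e'] by (simp add: br_def)
    qed
  qed
  have br_lo: "br x (lo x) = f (lo x)" if xE: "x \<notin> E" and ne: "E \<inter> {..x} \<noteq> {}" for x
  proof -
    obtain e where e: "e \<in> E" "e \<le> x" using ne by auto
    show ?thesis
    proof (cases "E \<inter> {x..} = {}")
      case True
      then show ?thesis using ne loP[OF e] V by (simp add: br_def)
    next
      case False
      then obtain e' where e': "e' \<in> E" "x \<le> e'" by auto
      have "lo x \<noteq> x" using loP[OF e] xE by metis
      then have "lo x < hi x" using loP(2)[OF e] hiP(2)[OF e'] by linarith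
      then show ?thesis using ne False \<Phi> loP[OF e] hiP[OF e'] by (simp add: br_def)
    qed
  qed
  have br_hi: "br x (hi x) = f (hi x)" if xE: "x \<notin> E" and ne: "E \<inter> {x..} \<noteq> {}" for x
  proof -
    obtain e' where e': "e' \<in> E" "x \<le> e'" using ne by auto
    show ?thesis
    proof (cases "E \<inter> {..x} = {}")
      case True
      then show ?thesis using ne hiP[OF e'] V by (simp add: br_def)
    next
      case False
      then obtain e where e: "e \<in> E" "e \<le> x" by auto
      have "lo x \<noteq> x" using loP[OF e] xE by metis
      then have "lo x < hi x" using loP(2)[OF e] hiP(2)[OF e'] by linarith
      then show ?thesis using ne False \<Phi> loP[OF e] hiP[OF e'] by (simp add: br_def)
    qed
  qed
  have br_same: "br y = br x" if "\<And>e. e \<in> E \<Longrightarrow> \<not> (min x y \<le> e \<and> e \<le> max x y)" for x y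
  proof -
    have 1: "E \<inter> {..y} = E \<inter> {..x}" using that by (force simp: min_def max_def split: if_splits)
    have 2: "E \<inter> {y..} = E \<inter> {x..}" using that by (force simp: min_def max_def split: if_splits)
    show ?thesis unfolding br_def lo_def hi_def 1 2 ..
  qed
  have gS: "inS G t (g t)" for t
    using fE brG inS_G by (cases "t \<in> E") (auto simp: g_def)
  have cont: "isCont g x" for x
  proof (cases "x \<in> E")
    case False
    have "open (- E)" using cE by (simp add: open_Compl)
    then obtain r where r: "r > 0" "ball x r \<subseteq> - E" using False open_contains_ball by blast
    have "\<forall>\<^sub>F y in nhds x. g y = br x y"
      unfolding eventually_nhds_metric
    proof (intro exI[of _ r] conjI allI impI)
      show "r > 0" by fact
      fix y assume y: "dist y x < r"
      have nb: "\<not> (min x y \<le> e \<and> e \<le> max x y)" if "e \<in> E" for e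
      proof
        assume "min x y \<le> e \<and> e \<le> max x y"
        then have "dist x e < r" using y by (auto simp: dist_real_def min_def max_def split: if_splits)
        then show False using r that by auto
      qed
      have "y \<notin> E" using r y by (auto simp: dist_commute)
      then show "g y = br x y" using br_same[OF nb] by (simp add: g_def)
    qed
    moreover have "isCont (br x) x"
      using G_cont[OF GC brG[OF False]] by (simp add: continuous_on_eq_continuous_at)
    ultimately show ?thesis using isCont_cong by blast
  next
    case pE: True
    define p where "p = x"
    have pE': "p \<in> E" using pE by (simp add: p_def)
    have gp: "g p = f p" using pE' by (simp add: g_def)
    have "\<exists>d>0. \<forall>y. dist y p < d \<longrightarrow> dist (g y) (g p) < \<epsilon>" if ep: "\<epsilon> > 0" for \<epsilon>
    proof -
      define u where "u = V p"
      have uG: "u \<in> G" and up: "u p = f p" using V[OF pE'] by (auto simp: u_def)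
      obtain \<delta>1 where d1: "\<delta>1 > 0" and LLp: "\<And>a b ya yb. p - \<delta>1 < a \<Longrightarrow> a < b \<Longrightarrow> b < p + \<delta>1 \<Longrightarrow> inS G a ya \<Longrightarrow> inS G b yb
         \<Longrightarrow> \<bar>ya - u p\<bar> < \<delta>1 \<Longrightarrow> \<bar>yb - u p\<bar> < \<delta>1
         \<Longrightarrow> (\<exists>\<phi>\<in>G. \<phi> a = ya \<and> \<phi> b = yb \<and> (\<forall>t\<in>{a..b}. \<bar>\<phi> t - u p\<bar> < \<epsilon>/4))"
        using LL[OF GC cp cn uG, of "\<epsilon>/4" p] ep by auto
      obtain \<delta>f where df: "\<delta>f > 0" "\<And>t. \<bar>t - p\<bar> < \<delta>f \<Longrightarrow> \<bar>f t - f p\<bar> < min \<delta>1 (\<epsilon>/8)"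
        using cont_eps[OF fc, of "min \<delta>1 (\<epsilon>/8)" p] d1 ep by auto
      define \<delta>2 where "\<delta>2 = min (min \<delta>1 \<delta>f) (\<epsilon>/16)"
      have d2: "\<delta>2 > 0" "\<delta>2 \<le> \<delta>1" "\<delta>2 \<le> \<delta>f" "\<delta>2 \<le> \<epsilon>/16" using d1 df ep by (auto simp: \<delta>2_def)
      have fnear: "\<bar>f t - f p\<bar> < \<epsilon>/8" "\<bar>f t - f p\<bar> < \<delta>1" if "\<bar>t - p\<bar> < \<delta>2" for t
        using df(2)[of t] that d2 by auto
      have GAP: "\<bar>g y - f p\<bar> < \<epsilon>" if yE: "y \<notin> E" and n1: "E \<inter> {..y} \<noteq> {}" and n2: "E \<inter> {y..} \<noteq> {}"
        and l1: "p - \<delta>2 < lo y" and h1: "hi y < p + \<delta>2" for y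
      proof -
        obtain e where e: "e \<in> E" "e \<le> y" using n1 by auto
        obtain e' where e': "e' \<in> E" "y \<le> e'" using n2 by auto
        define a where "a = lo y"
        define b where "b = hi y"
        have aE: "a \<in> E" "a \<le> y" using loP[OF e] by (auto simp: a_def)
        have bE: "b \<in> E" "y \<le> b" using hiP[OF e'] by (auto simp: b_def)
        have "a \<noteq> y" using aE yE by metis
        then have ay: "a < y" using aE by simp
        have "b \<noteq> y" using bE yE by metis
        then have yb: "y < b" using bE by simp
        have ab1: "p - \<delta>2 < a" "b < p + \<delta>2" using l1 h1 by (auto simp: a_def b_def)
        have fa: "\<bar>f a - f p\<bar> < \<epsilon>/8" "\<bar>f a - u p\<bar> < \<delta>1" using fnear[of a] ab1 ay yb up by auto
        have fb: "\<bar>f b - u p\<bar> < \<delta>1" using fnear[of b] ab1 ay yb up by auto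
        obtain \<psi> where \<psi>: "\<psi> \<in> G" "\<psi> a = f a" "\<psi> b = f b" "\<forall>t\<in>{a..b}. \<bar>\<psi> t - u p\<bar> < \<epsilon>/4"
          using LLp[of a b "f a" "f b"] ab1 ay yb d2 fE[OF aE(1)] fE[OF bE(1)] fa fb by force
        have "\<epsilon>/2 \<in> M a b"
          unfolding M_def
        proof (intro CollectI bexI[of _ \<psi>] conjI ballI)
          fix t assume "t \<in> {a..b}"
          then have "\<bar>\<psi> t - f p\<bar> < \<epsilon>/4" using \<psi>(4) up by auto
          then show "\<bar>\<psi> t - f a\<bar> \<le> \<epsilon>/2" using fa(1) by arith
        qed (use \<psi> in auto)
        then have "\<bar>\<Phi> a b y - f a\<bar> \<le> \<epsilon>/2 + (b - a)"
          using \<Phi>[OF aE(1) bE(1)] ay yb by auto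
        moreover have "g y = \<Phi> a b y" using yE n1 n2 by (simp add: g_def br_def a_def b_def)
        moreover have "b - a < \<epsilon>/8" using ab1 d2 by linarith
        ultimately show ?thesis using fa(1) by arith
      qed
      have "\<exists>dR>0. \<forall>y. p < y \<and> y < p + dR \<longrightarrow> \<bar>g y - f p\<bar> < \<epsilon>"
      proof (cases "\<exists>e\<in>E. p < e \<and> e < p + \<delta>2")
        case True
        then obtain e where e: "e \<in> E" "p < e" "e < p + \<delta>2" by auto
        show ?thesis
        proof (intro exI[of _ "e - p"] conjI allI impI)
          show "e - p > 0" using e by simp
          fix y assume y: "p < y \<and> y < p + (e - p)"
          show "\<bar>g y - f p\<bar> < \<epsilon>"
          proof (cases "y \<in> E")
            case True
            then show ?thesis using fnear(1)[of y] y e ep by (simp add: g_def)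
          next
            case False
            have n1: "E \<inter> {..y} \<noteq> {}" using pE' y by auto
            have n2: "E \<inter> {y..} \<noteq> {}" using e y by auto
            have "p \<le> lo y" using loP(3)[OF pE', of y p] pE' y by auto
            moreover have "hi y \<le> e" using hiP(3)[OF e(1), of y e] e y by auto
            ultimately show ?thesis using GAP[OF False n1 n2] d2 e by auto
          qed
        qed
      next
        case False
        define y0 where "y0 = p + \<delta>2/2"
        have noE: "e \<notin> E" if "p < e" "e < p + \<delta>2" for e using False that by auto
        have y0E: "y0 \<notin> E" using noE[of y0] d2 by (auto simp: y0_def)
        have n1: "E \<inter> {..y0} \<noteq> {}" using pE' d2 by (auto simp: y0_def)
        have "lo y0 = p"
        proof -
          have "p \<le> lo y0" using loP(3)[OF pE', of y0 p] pE' d2 by (auto simp: y0_def)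
          moreover have "lo y0 \<le> y0" "lo y0 \<in> E" using loP[OF pE', of y0] d2 by (auto simp: y0_def)
          ultimately show ?thesis using noE[of "lo y0"] d2 unfolding y0_def by force
        qed
        then have b0p: "br y0 p = f p" using br_lo[OF y0E n1] by simp
        obtain dc where dc: "dc > 0" "\<And>t. \<bar>t - p\<bar> < dc \<Longrightarrow> \<bar>br y0 t - br y0 p\<bar> < \<epsilon>"
          using cont_eps[OF G_cont[OF GC brG[OF y0E]], of \<epsilon> p] ep by auto
        show ?thesis
        proof (intro exI[of _ "min \<delta>2 dc"] conjI allI impI)
          show "min \<delta>2 dc > 0" using d2 dc by simp
          fix y assume y: "p < y \<and> y < p + min \<delta>2 dc"
          have yE: "y \<notin> E" using noE[of y] y by (simp add: min_def split: if_splits)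
          have "br y = br y0"
            by (rule br_same) (use noE y d2 in \<open>auto simp: y0_def min_def max_def split: if_splits\<close>)
          then have "g y = br y0 y" using yE by (simp add: g_def)
          then show "\<bar>g y - f p\<bar> < \<epsilon>" using dc(2)[of y] y b0p by auto
        qed
      qed
      then obtain dR where dR: "dR > 0" "\<And>y. p < y \<Longrightarrow> y < p + dR \<Longrightarrow> \<bar>g y - f p\<bar> < \<epsilon>" by blast
      have "\<exists>dL>0. \<forall>y. p - dL < y \<and> y < p \<longrightarrow> \<bar>g y - f p\<bar> < \<epsilon>"
      proof (cases "\<exists>e\<in>E. p - \<delta>2 < e \<and> e < p")
        case True
        then obtain e where e: "e \<in> E" "p - \<delta>2 < e" "e < p" by auto
        show ?thesis
        proof (intro exI[of _ "p - e"] conjI allI impI)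
          show "p - e > 0" using e by simp
          fix y assume y: "p - (p - e) < y \<and> y < p"
          show "\<bar>g y - f p\<bar> < \<epsilon>"
          proof (cases "y \<in> E")
            case True
            then show ?thesis using fnear(1)[of y] y e ep by (simp add: g_def)
          next
            case False
            have n1: "E \<inter> {..y} \<noteq> {}" using e y by auto
            have n2: "E \<inter> {y..} \<noteq> {}" using pE' y by auto
            have "e \<le> lo y" using loP(3)[OF e(1), of y e] e y by auto
            moreover have "hi y \<le> p" using hiP(3)[OF pE', of y p] pE' y by auto
            ultimately show ?thesis using GAP[OF False n1 n2] d2 e by auto
          qed
        qed
      next
        case False
        define y0 where "y0 = p - \<delta>2/2"
        have noE: "e \<notin> E" if "p - \<delta>2 < e" "e < p" for e using False that by auto
        have y0E: "y0 \<notin> E" using noE[of y0] d2 by (auto simp: y0_def)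
        have n2: "E \<inter> {y0..} \<noteq> {}" using pE' d2 by (auto simp: y0_def)
        have "hi y0 = p"
        proof -
          have "hi y0 \<le> p" using hiP(3)[OF pE', of y0 p] pE' d2 by (auto simp: y0_def)
          moreover have "y0 \<le> hi y0" "hi y0 \<in> E" using hiP[OF pE', of y0] d2 by (auto simp: y0_def)
          ultimately show ?thesis using noE[of "hi y0"] d2 unfolding y0_def by force
        qed
        then have b0p: "br y0 p = f p" using br_hi[OF y0E n2] by simp
        obtain dc where dc: "dc > 0" "\<And>t. \<bar>t - p\<bar> < dc \<Longrightarrow> \<bar>br y0 t - br y0 p\<bar> < \<epsilon>"
          using cont_eps[OF G_cont[OF GC brG[OF y0E]], of \<epsilon> p] ep by auto
        show ?thesis
        proof (intro exI[of _ "min \<delta>2 dc"] conjI allI impI)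
          show "min \<delta>2 dc > 0" using d2 dc by simp
          fix y assume y: "p - min \<delta>2 dc < y \<and> y < p"
          have yE: "y \<notin> E" using noE[of y] y by (simp add: min_def split: if_splits)
          have "br y = br y0"
            by (rule br_same) (use noE y d2 in \<open>auto simp: y0_def min_def max_def split: if_splits\<close>)
          then have "g y = br y0 y" using yE by (simp add: g_def)
          then show "\<bar>g y - f p\<bar> < \<epsilon>" using dc(2)[of y] y b0p by auto
        qed
      qed
      then obtain dL where dL: "dL > 0" "\<And>y. p - dL < y \<Longrightarrow> y < p \<Longrightarrow> \<bar>g y - f p\<bar> < \<epsilon>" by blast
      show ?thesis
      proof (intro exI[of _ "min dR dL"] conjI allI impI)
        show "min dR dL > 0" using dR dL by simp
        fix y assume y: "dist y p < min dR dL"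
        consider "y = p" | "p < y" | "y < p" by linarith
        then show "dist (g y) (g p) < \<epsilon>"
        proof cases
          case 1 then show ?thesis using ep by simp
        next
          case 2 then show ?thesis using dR(2)[of y] y gp by (auto simp: dist_real_def)
        next
          case 3 then show ?thesis using dL(2)[of y] y gp by (auto simp: dist_real_def)
        qed
      qed
    qed
    then show ?thesis unfolding continuous_at_eps_delta p_def by blast
  qed
  have "g \<in> G"
    by (rule complete_in[OF cp _ gS]) (simp add: cont continuous_on_eq_continuous_at)
  moreover have "\<forall>x\<in>E. f x = g x" by (simp add: g_def)
  ultimately show ?thesis by blast
qed



lemma hole:
  assumes "graph f - union_graphs G = {(x, f x)}"
  shows "\<not> inS G x (f x)" "\<And>y. y \<noteq> x \<Longrightarrow> inS G y (f y)"
proof -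
  have "(x, f x) \<in> graph f - union_graphs G" using assms by simp
  then show "\<not> inS G x (f x)" by (simp add: mem_ug)
  fix y assume "y \<noteq> x"
  then have "(y, f y) \<notin> graph f - union_graphs G" using assms by simp
  moreover have "(y, f y) \<in> graph f" by (auto simp: graph_def)
  ultimately show "inS G y (f y)" by (simp add: mem_ug)
qed

lemma hole_intro:
  assumes "\<not> inS G x (f x)" "\<And>y. y \<noteq> x \<Longrightarrow> inS G y (f y)"
  shows "graph f - union_graphs G = {(x, f x)}"
  using assms by (auto simp: graph_def mem_ug; metis)

lemma R_rel_iff: "(f, E) \<in> R_rel G \<longleftrightarrow> f \<in> CRR \<and> closed E \<and> (\<exists>g\<in>G. \<forall>x\<in>E. f x = g x)"
  by (simp add: R_rel_def)

lemma single_in_E: "f \<in> CRR \<Longrightarrow> {y} \<in> E_of G {f} \<longleftrightarrow> inS G y (f y)"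
  unfolding E_of_def R_rel_def inS_def by (auto; metis)

theorem corollary4p6:
  fixes G :: "(real \<Rightarrow> real) set"
  assumes "G \<subseteq> CRR" and "G \<noteq> {}"
  shows "K_of G = {{E. closed E \<and> E \<subseteq> X} | X. True}
     \<longleftrightarrow> (complete_family G \<and> connected_family G \<and>
          (\<forall>x. \<exists>f\<in>CRR. graph f - union_graphs G = {(x, f x)}))"
proof
  assume H: "K_of G = {{E. closed E \<and> E \<subseteq> X} | X. True}"
  have EF: "\<exists>X. E_of G F = {E. closed E \<and> E \<subseteq> X}" if "F \<subseteq> CRR" for F
  proof -
    have "E_of G F \<in> K_of G" using that by (auto simp: K_of_def)
    then show ?thesis using H by auto
  qed
  have cp: "complete_family G"
    unfolding complete_family_def
  proof (intro ballI impI)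
    fix g assume g: "g \<in> CRR" "graph g \<subseteq> union_graphs G"
    obtain X where X: "E_of G {g} = {E. closed E \<and> E \<subseteq> X}" using EF[of "{g}"] g by auto
    have "inS G y (g y)" for y using g(2) by (auto simp: graph_def mem_ug[symmetric])
    then have "y \<in> X" for y using single_in_E[OF g(1), of y G] X by auto
    then have "UNIV \<in> E_of G {g}" using X by auto
    then obtain h where "h \<in> G" "\<forall>x. g x = h x" by (auto simp: E_of_def R_rel_def)
    then show "g \<in> G" by (metis ext)
  qed
  have cn: "connected_family G"
    unfolding connected_family_def
  proof (intro ballI allI impI)
    fix f g x y assume fg: "f \<in> G" "g \<in> G" and xy: "(x::real) \<noteq> y"
    define k where "k t = f x + (g y - f x) * (t - x) / (y - x)" for t
    have kc: "k \<in> CRR" unfolding CRR_def k_def using xy by (auto intro!: continuous_intros)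
    have kx: "k x = f x" by (simp add: k_def)
    have ky: "k y = g y" using xy by (simp add: k_def)
    obtain X where X: "E_of G {k} = {E. closed E \<and> E \<subseteq> X}" using EF[of "{k}"] kc by auto
    have "x \<in> X" using single_in_E[OF kc, of x G] X kx fg inS_G[of f G x] by auto
    moreover have "y \<in> X" using single_in_E[OF kc, of y G] X ky fg inS_G[of g G y] by auto
    ultimately have "{x, y} \<in> E_of G {k}" using X by auto
    then obtain h where "h \<in> G" "k x = h x" "k y = h y" by (auto simp: E_of_def R_rel_def)
    then show "\<exists>h\<in>G. h x = f x \<and> h y = g y" using kx ky by metis
  qed
  have pt: "\<exists>f\<in>CRR. graph f - union_graphs G = {(x, f x)}" for x
  proof -
    have "{E. closed E \<and> E \<subseteq> - {x}} \<in> K_of G" unfolding H by blast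
    then obtain F where F: "F \<subseteq> CRR" "E_of G F = {E. closed E \<and> E \<subseteq> - {x}}"
      by (auto simp: K_of_def)
    have "{x} \<notin> E_of G F" using F by auto
    then obtain f where f: "f \<in> F" "(f, {x}) \<notin> R_rel G" by (auto simp: E_of_def)
    have fc: "f \<in> CRR" using f F by auto
    have "\<not> inS G x (f x)" using f fc by (auto simp: R_rel_def inS_def)
    moreover have "inS G y (f y)" if "y \<noteq> x" for y
    proof -
      have "{y} \<in> E_of G F" using F that by auto
      then have "(f, {y}) \<in> R_rel G" using f by (auto simp: E_of_def)
      then show ?thesis by (auto simp: R_rel_def inS_def)
    qed
    ultimately show ?thesis using fc hole_intro by blast
  qed
  show "complete_family G \<and> connected_family G \<and> (\<forall>x. \<exists>f\<in>CRR. graph f - union_graphs G = {(x, f x)})"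
    using cp cn pt by blast
next
  assume H: "complete_family G \<and> connected_family G \<and> (\<forall>x. \<exists>f\<in>CRR. graph f - union_graphs G = {(x, f x)})"
  then have cp: "complete_family G" and cn: "connected_family G"
    and pt: "\<And>x. \<exists>f\<in>CRR. graph f - union_graphs G = {(x, f x)}" by auto
  have KL': "(f, E) \<in> R_rel G" if "f \<in> CRR" "closed E" "\<And>x. x \<in> E \<Longrightarrow> inS G x (f x)" for f E
  proof -
    have "continuous_on UNIV f" using that(1) by (simp add: CRR_def)
    from KL[OF assms cp cn this that(2,3)] show ?thesis using that by (simp add: R_rel_def)
  qed
  show "K_of G = {{E. closed E \<and> E \<subseteq> X} | X. True}"
  proof (intro equalityI subsetI)
    fix K :: "real set set" assume "K \<in> K_of G"
    then obtain F where F: "F \<subseteq> CRR" "K = E_of G F" by (auto simp: K_of_def)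
    define X where "X = {x. \<forall>f\<in>F. inS G x (f x)}"
    have "E_of G F = {E. closed E \<and> E \<subseteq> X}"
    proof (intro equalityI subsetI)
      fix E assume "E \<in> E_of G F"
      then show "E \<in> {E. closed E \<and> E \<subseteq> X}"
        by (auto simp: E_of_def R_rel_def X_def inS_def) metis
    next
      fix E assume "E \<in> {E. closed E \<and> E \<subseteq> X}"
      then show "E \<in> E_of G F" using F KL' unfolding E_of_def X_def by blast
    qed
    then show "K \<in> {{E. closed E \<and> E \<subseteq> X} | X. True}" using F by auto
  next
    fix K :: "real set set" assume "K \<in> {{E. closed E \<and> E \<subseteq> X} | X. True}"
    then obtain X where X: "K = {E. closed E \<and> E \<subseteq> X}" by auto
    define F where "F = {f \<in> CRR. \<exists>x::real. x \<notin> X \<and> graph f - union_graphs G = {(x, f x)}}"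
    have "E_of G F = {E. closed E \<and> E \<subseteq> X}"
    proof (intro equalityI subsetI)
      fix E assume E: "E \<in> E_of G F"
      have "z \<in> X" if "z \<in> E" for z
      proof (rule ccontr)
        assume "z \<notin> X"
        obtain f where f: "f \<in> CRR" "graph f - union_graphs G = {(z, f z)}" using pt by blast
        then have "f \<in> F" using \<open>z \<notin> X\<close> by (auto simp: F_def)
        then have "(f, E) \<in> R_rel G" using E by (auto simp: E_of_def)
        then have "inS G z (f z)" using that by (auto simp: R_rel_def inS_def)
        then show False using hole(1)[OF f(2)] by simp
      qed
      then show "E \<in> {E. closed E \<and> E \<subseteq> X}" using E by (auto simp: E_of_def)
    next
      fix E assume E: "E \<in> {E. closed E \<and> E \<subseteq> X}"
      have "(f, E) \<in> R_rel G" if fF: "f \<in> F" for f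
      proof -
        obtain x where x: "f \<in> CRR" "x \<notin> X" "graph f - union_graphs G = {(x, f x)}"
          using fF by (auto simp: F_def)
        show ?thesis
        proof (rule KL'[OF x(1)])
          show "closed E" using E by simp
          fix t assume "t \<in> E"
          then have "t \<noteq> x" using E x by auto
          then show "inS G t (f t)" using hole(2)[OF x(3)] by simp
        qed
      qed
      then show "E \<in> E_of G F" using E by (auto simp: E_of_def)
    qed
    moreover have "F \<subseteq> CRR" by (auto simp: F_def)
    ultimately show "K \<in> K_of G" using X by (auto simp: K_of_def)
  qed
qed


end
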